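(* For every input permutation, algorithm $\mathcal{D}^2\mathcal{I}$ executes its instruction 6 only at steps where $D_2$ is empty.
   Context: The $\mathfrak{D}^2\mathfrak{I}$ machine consists of two decreasing stacks $D_1,D_2$ followed in series by an increasing stack $I$. Elements of $D_1,D_2$ must be in decreasing order from top to bottom (top largest); elements of $I$ in increasing order from top to bottom (top smallest). Operations: $d_0$ pushes the next input element (called $Input$) into $D_1$; $d_1$ moves $Top(D_1)$ to $D_2$; $d_2$ moves $Top(D_2)$ to $I$; $d_3$ pops $Top(I)$ and appends it to the output. Any comparison involving an empty stack is considered true. Conditions: ($\alpha$) $Top(D_2)<Top(I)$; ($\beta$) $Top(D_2)<Top(D_1)$ and $Top(D_1)<Top(I)$; ($\gamma$) $Top(D_1)<Input$, $Input<Top(I)$, and the sequence of input elements from $Input$ up to the first input element larger than $Top(D_2)$ is increasing. Algorithm $\mathcal{D}^2\mathcal{I}$ repeatedly executes the first applicable instruction among: 1. if $Top(I)$ is the next element to be output, perform $d_3$; 2. if the elements contained in $D_1\cup D_2$ are exactly the next elements to be output, move them to the output in increasing order; 3. perform $d_1$ if it is legal and ($\beta$) holds; 4. perform $d_0$ if it is legal and ($\gamma$) holds; 5. perform $d_2$ if it is legal and ($\alpha$) holds; 6. otherwise perform $d_3$. *)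

theory Defs
  imports Main
begin

text \<open>Stacks are lists whose head is the top element. The input is a list whose head
  is the next input element (Input).
  The input is a permutation of 1..n, so the next element to be output is
  length(output) + 1.\<close>

record state =
  inp :: "nat list"
  D1  :: "nat list"
  D2  :: "nat list"
  I   :: "nat list"
  out :: "nat list"

definition init :: "nat list \<Rightarrow> state" where
  "init \<pi> = \<lparr>inp = \<pi>, D1 = [], D2 = [], I = [], out = []\<rparr>"

definition is_perm_input :: "nat list \<Rightarrow> bool" where
  "is_perm_input \<pi> \<longleftrightarrow> distinct \<pi> \<and> set \<pi> = {1..length \<pi>}"

text \<open>Comparison of tops; any comparison involving an empty stack is true.\<close>
definition ltT :: "nat list \<Rightarrow> nat list \<Rightarrow> bool" where
  "ltT xs ys \<longleftrightarrow> xs = [] \<or> ys = [] \<or> hd xs < hd ys"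

definition nxt :: "state \<Rightarrow> nat" where
  "nxt s = Suc (length (out s))"

definition legal_d0 :: "state \<Rightarrow> bool" where
  "legal_d0 s \<longleftrightarrow> inp s \<noteq> [] \<and> ltT (D1 s) (inp s)"
definition legal_d1 :: "state \<Rightarrow> bool" where
  "legal_d1 s \<longleftrightarrow> D1 s \<noteq> [] \<and> ltT (D2 s) (D1 s)"
definition legal_d2 :: "state \<Rightarrow> bool" where
  "legal_d2 s \<longleftrightarrow> D2 s \<noteq> [] \<and> ltT (D2 s) (I s)"
definition legal_d3 :: "state \<Rightarrow> bool" where
  "legal_d3 s \<longleftrightarrow> I s \<noteq> []"

definition op_d0 :: "state \<Rightarrow> state" where
  "op_d0 s = s\<lparr>inp := tl (inp s), D1 := hd (inp s) # D1 s\<rparr>"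
definition op_d1 :: "state \<Rightarrow> state" where
  "op_d1 s = s\<lparr>D1 := tl (D1 s), D2 := hd (D1 s) # D2 s\<rparr>"
definition op_d2 :: "state \<Rightarrow> state" where
  "op_d2 s = s\<lparr>D2 := tl (D2 s), I := hd (D2 s) # I s\<rparr>"
definition op_d3 :: "state \<Rightarrow> state" where
  "op_d3 s = s\<lparr>I := tl (I s), out := out s @ [hd (I s)]\<rparr>"

definition cond_alpha :: "state \<Rightarrow> bool" where
  "cond_alpha s \<longleftrightarrow> ltT (D2 s) (I s)"
definition cond_beta :: "state \<Rightarrow> bool" where
  "cond_beta s \<longleftrightarrow> ltT (D2 s) (D1 s) \<and> ltT (D1 s) (I s)"

text \<open>The input segment from Input up to (and including) the first input element
  larger than Top(D2) (the whole remaining input if there is none; just Input if D2 is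
  empty, since comparisons with an empty stack are true).\<close>
definition gamma_seg :: "state \<Rightarrow> nat list" where
  "gamma_seg s = (case D2 s of [] \<Rightarrow> take 1 (inp s)
     | t # _ \<Rightarrow> take (Suc (length (takeWhile (\<lambda>x. \<not> t < x) (inp s)))) (inp s))"
definition cond_gamma :: "state \<Rightarrow> bool" where
  "cond_gamma s \<longleftrightarrow> ltT (D1 s) (inp s) \<and> ltT (inp s) (I s)
      \<and> sorted_wrt (<) (gamma_seg s)"

definition instr1 :: "state \<Rightarrow> bool" where
  "instr1 s \<longleftrightarrow> I s \<noteq> [] \<and> hd (I s) = nxt s"
definition instr2 :: "state \<Rightarrow> bool" where
  "instr2 s \<longleftrightarrow> D1 s @ D2 s \<noteq> [] \<and>
     set (D1 s) \<union> set (D2 s) = {nxt s..<nxt s + length (D1 s) + length (D2 s)}"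
definition instr3 :: "state \<Rightarrow> bool" where
  "instr3 s \<longleftrightarrow> legal_d1 s \<and> cond_beta s"
definition instr4 :: "state \<Rightarrow> bool" where
  "instr4 s \<longleftrightarrow> legal_d0 s \<and> cond_gamma s"
definition instr5 :: "state \<Rightarrow> bool" where
  "instr5 s \<longleftrightarrow> legal_d2 s \<and> cond_alpha s"

definition instr6 :: "state \<Rightarrow> bool" where
  "instr6 s \<longleftrightarrow> \<not> instr1 s \<and> \<not> instr2 s \<and> \<not> instr3 s \<and> \<not> instr4 s \<and> \<not> instr5 s"

definition step :: "state \<Rightarrow> state option" where
  "step s =
    (if instr1 s then Some (op_d3 s)
     else if instr2 s then Some (s\<lparr>D1 := [], D2 := [], out := out s @ sort (D1 s @ D2 s)\<rparr>)
     else if instr3 s then Some (op_d1 s)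
     else if instr4 s then Some (op_d0 s)
     else if instr5 s then Some (op_d2 s)
     else if legal_d3 s then Some (op_d3 s) else None)"

definition reachable :: "nat list \<Rightarrow> state \<Rightarrow> bool" where
  "reachable \<pi> s \<longleftrightarrow> (init \<pi>, s) \<in> {(a, b). step a = Some b}\<^sup>*"

end

theory Submission
  imports Defs
begin

definition inv :: "state \<Rightarrow> bool" where
  "inv s \<longleftrightarrow> sorted_wrt (>) (D2 s) \<and> sorted_wrt (<) (I s) \<and> ltT (D2 s) (I s)"

lemma pop_lt: "sorted_wrt (<) (xs::nat list) \<Longrightarrow> ltT ys xs \<Longrightarrow> ltT ys (tl xs)"
  by (cases xs; cases "tl xs"; cases ys) (auto simp: ltT_def)

lemma pop_gt: "sorted_wrt (>) (xs::nat list) \<Longrightarrow> ltT (tl xs) (hd xs # ys)"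
  by (cases xs; cases "tl xs") (auto simp: ltT_def)

lemma push_lt: "sorted_wrt (<) (ys::nat list) \<Longrightarrow> ltT [x] ys \<Longrightarrow> sorted_wrt (<) (x # ys)"
  by (cases ys) (auto simp: ltT_def)

lemma push_gt: "sorted_wrt (>) (ys::nat list) \<Longrightarrow> ltT ys [x] \<Longrightarrow> sorted_wrt (>) (x # ys)"
  by (cases ys) (auto simp: ltT_def)

lemma inv_step:
  assumes "inv s" "step s = Some t"
  shows "inv t"
proof -
  have d3: "inv (op_d3 s)"
    using assms(1) pop_lt[of "I s" "D2 s"]
    by (cases "I s") (auto simp: inv_def op_d3_def)
  have d1: "instr3 s \<Longrightarrow> inv (op_d1 s)"
    using assms(1) push_gt[of "D2 s" "hd (D1 s)"]
    by (cases "D1 s"; cases "D2 s") (auto simp: inv_def op_d1_def instr3_def legal_d1_def cond_beta_def ltT_def)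
  have d2: "instr5 s \<Longrightarrow> inv (op_d2 s)"
    using assms(1) push_lt[of "I s" "hd (D2 s)"] pop_gt[of "D2 s" "I s"]
    by (cases "D2 s") (auto simp: inv_def op_d2_def instr5_def legal_d2_def ltT_def)
  have d0: "inv (op_d0 s)" using assms(1) by (simp add: inv_def op_d0_def)
  have c2: "inv (s\<lparr>D1 := [], D2 := [], out := out s @ sort (D1 s @ D2 s)\<rparr>)"
    using assms(1) by (simp add: inv_def ltT_def)
  show ?thesis using assms(2) d0 d1 d2 d3 c2
    by (auto simp: step_def split: if_splits)
qed

lemma inv_reach: "(a, b) \<in> {(a, b). step a = Some b}\<^sup>* \<Longrightarrow> inv a \<Longrightarrow> inv b"
  by (induction rule: rtrancl_induct) (auto intro: inv_step)

theorem mainTheorem6: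
  fixes \<pi> :: "nat list" and s :: state
  assumes "is_perm_input \<pi>" and "reachable \<pi> s" and "instr6 s"
  shows "D2 s = []"
proof -
  have "inv (init \<pi>)" by (simp add: inv_def init_def ltT_def)
  then have "inv s" using assms(2) inv_reach unfolding reachable_def by blast
  then show ?thesis using assms(3)
    by (auto simp: inv_def instr6_def instr5_def legal_d2_def cond_alpha_def)
qed

end
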